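(* A function $f : X \to \mathbb{R}$ is of Baire class 1 if and only if both $f$ and $-f$ are limsup functions.
   Context: Let $A$ be a non-empty countable set and $T$ a pruned tree on $A$ (a set of finite sequences of elements of $A$, closed under initial segments, in which every sequence has a proper extension in $T$). Let $X$ be the set of infinite branches of $T$, with the topology generated by the cylinder sets $O(s) = \{x \in X : s \text{ is an initial segment of } x\}$, $s \in T$. A function $f : X \to \mathbb{R}$ is a limsup function if there exists $u : T \to \mathbb{R}$ with $f(x) = \limsup_{t\to\infty} u(x_0,\dots,x_t)$ for every $x \in X$. Baire class 1 means a pointwise limit of a sequence of continuous functions $X \to \mathbb{R}$. *)

theory Defs
  imports "HOL-Analysis.Analysis" "HOL-Library.Countable_Set" "HOL-Library.Sublist"
begin

definition pruned_tree :: "'a set \<Rightarrow> 'a list set \<Rightarrow> bool" where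
  "pruned_tree A T \<longleftrightarrow>
     T \<subseteq> lists A \<and>
     (\<forall>s\<in>T. \<forall>r. prefix r s \<longrightarrow> r \<in> T) \<and>
     (\<forall>s\<in>T. \<exists>t\<in>T. strict_prefix s t)"

definition branches :: "'a list set \<Rightarrow> (nat \<Rightarrow> 'a) set" where
  "branches T = {x. \<forall>n. map x [0..<n] \<in> T}"

definition cyl :: "'a list set \<Rightarrow> 'a list \<Rightarrow> (nat \<Rightarrow> 'a) set" where
  "cyl T s = {x \<in> branches T. map x [0..<length s] = s}"

definition branch_topology :: "'a list set \<Rightarrow> (nat \<Rightarrow> 'a) topology" where
  "branch_topology T = topology_generated_by (cyl T ` T)"

definition limsup_function :: "'a list set \<Rightarrow> ((nat \<Rightarrow> 'a) \<Rightarrow> real) \<Rightarrow> bool" where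
  "limsup_function T f \<longleftrightarrow>
     (\<exists>u :: 'a list \<Rightarrow> real. \<forall>x \<in> branches T.
        ereal (f x) = limsup (\<lambda>t. ereal (u (map x [0..<Suc t]))))"

definition baire_class_1 :: "'a list set \<Rightarrow> ((nat \<Rightarrow> 'a) \<Rightarrow> real) \<Rightarrow> bool" where
  "baire_class_1 T f \<longleftrightarrow>
     (\<exists>g :: nat \<Rightarrow> (nat \<Rightarrow> 'a) \<Rightarrow> real.
        (\<forall>n. continuous_map (branch_topology T) euclideanreal (g n)) \<and>
        (\<forall>x \<in> branches T. (\<lambda>n. g n x) \<longlonglongrightarrow> f x))"

end

theory Submission
  imports Defs
begin

lemma small_recip: "(r::real) > 0 \<Longrightarrow> \<exists>N::nat. 1 / (real N + 1) < r"
proof -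
  assume r: "r > 0"
  obtain n :: nat where n: "n > 0" "inverse (real n) < r" using ex_inverse_of_nat_less[OF r] by blast
  have "1 / (real n + 1) \<le> inverse (real n)" using n(1) by (simp add: inverse_eq_divide frac_le)
  then show ?thesis using n(2) by (intro exI[of _ n]) linarith
qed

lemma recip_mono: "(N::nat) \<le> M \<Longrightarrow> 1 / (real M + 1) \<le> 1 / (real N + 1)"
  by (simp add: frac_le)

lemma tri: "\<bar>a - c\<bar> < d \<Longrightarrow> \<bar>b - c\<bar> < d \<Longrightarrow> d + d = e \<Longrightarrow> \<bar>a - b\<bar> \<le> (e::real)"
  by linarith

lemma topspace_bt: "topspace (branch_topology T) = branches T"
proof -
  have "\<Union> (cyl T ` T) = branches T"
  proof
    show "\<Union> (cyl T ` T) \<subseteq> branches T" unfolding cyl_def by blast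
    show "branches T \<subseteq> \<Union> (cyl T ` T)"
    proof
      fix x assume x: "x \<in> branches T"
      have "map x [0..<0] \<in> T" using x unfolding branches_def by blast
      then have "[] \<in> T" by simp
      moreover have "x \<in> cyl T []" using x by (simp add: cyl_def)
      ultimately show "x \<in> \<Union> (cyl T ` T)" by blast
    qed
  qed
  then show ?thesis unfolding branch_topology_def by simp
qed

lemma gen_cyl:
  "generate_topology_on (cyl T ` T) U \<Longrightarrow> x \<in> U \<Longrightarrow>
     \<exists>k. \<forall>y\<in>branches T. (\<forall>i<k. y i = x i) \<longrightarrow> y \<in> U"
proof (induction arbitrary: x rule: generate_topology_on.induct)
  case Empty
  then show ?case by simp
next
  case (Int a b)
  then obtain k1 k2 where "\<forall>y\<in>branches T. (\<forall>i<k1. y i = x i) \<longrightarrow> y \<in> a"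
      "\<forall>y\<in>branches T. (\<forall>i<k2. y i = x i) \<longrightarrow> y \<in> b" by blast
  then show ?case by (intro exI[of _ "max k1 k2"]) auto
next
  case (UN K)
  then obtain k where "k \<in> K" "x \<in> k" by blast
  then show ?case using UN.IH[of k x] by blast
next
  case (Basis s)
  then obtain s0 where s0: "s = cyl T s0" by blast
  with Basis have xs: "map x [0..<length s0] = s0" by (simp add: cyl_def)
  show ?case
  proof (intro exI[of _ "length s0"] ballI impI)
    fix y assume y: "y \<in> branches T" "\<forall>i<length s0. y i = x i"
    then have "map y [0..<length s0] = map x [0..<length s0]" by simp
    then show "y \<in> s" using y xs s0 by (simp add: cyl_def)
  qed
qed

lemma cont_point:
  assumes "continuous_map (branch_topology T) euclideanreal g" "x \<in> branches T" "e > 0"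
  shows "\<exists>k. \<forall>y\<in>branches T. (\<forall>i<k. y i = x i) \<longrightarrow> \<bar>g y - g x\<bar> < e"
proof -
  have "openin (branch_topology T) {y \<in> topspace (branch_topology T). g y \<in> ball (g x) e}"
    by (rule openin_continuous_map_preimage[OF assms(1)]) simp
  then have "generate_topology_on (cyl T ` T) {y \<in> branches T. g y \<in> ball (g x) e}"
    unfolding topspace_bt unfolding branch_topology_def by (rule openin_topology_generated_by)
  moreover have "x \<in> {y \<in> branches T. g y \<in> ball (g x) e}" using assms by simp
  ultimately obtain k where k: "\<forall>y\<in>branches T. (\<forall>i<k. y i = x i) \<longrightarrow> y \<in> {y \<in> branches T. g y \<in> ball (g x) e}"
    using gen_cyl by blast
  show ?thesis
    by (intro exI[of _ k] ballI impI) (use k in \<open>auto simp: dist_real_def abs_minus_commute\<close>)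
qed

lemma cont_loc_const:
  assumes "\<forall>x\<in>branches T. \<exists>k. \<forall>y\<in>branches T. (\<forall>i<k. y i = x i) \<longrightarrow> g y = g x"
  shows "continuous_map (branch_topology T) euclideanreal g"
  unfolding continuous_map_def
proof (intro conjI allI impI)
  show "g \<in> topspace (branch_topology T) \<rightarrow> topspace euclideanreal" by simp
  fix U :: "real set" assume "openin euclideanreal U"
  show "openin (branch_topology T) {x \<in> topspace (branch_topology T). g x \<in> U}"
  proof (subst openin_subopen, intro ballI)
    fix x assume "x \<in> {x \<in> topspace (branch_topology T). g x \<in> U}"
    then have x: "x \<in> branches T" "g x \<in> U" unfolding topspace_bt by blast+
    obtain k where k: "\<forall>y\<in>branches T. (\<forall>i<k. y i = x i) \<longrightarrow> g y = g x" using assms x by blast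
    have mT: "map x [0..<k] \<in> T" using x by (simp add: branches_def)
    have op: "openin (branch_topology T) (cyl T (map x [0..<k]))"
      unfolding branch_topology_def openin_topology_generated_by_iff
      using mT by (intro generate_topology_on.Basis) blast
    have "x \<in> cyl T (map x [0..<k])" using x by (simp add: cyl_def)
    moreover have "cyl T (map x [0..<k]) \<subseteq> {x \<in> topspace (branch_topology T). g x \<in> U}"
    proof
      fix y assume "y \<in> cyl T (map x [0..<k])"
      then have y: "y \<in> branches T" "map y [0..<k] = map x [0..<k]" unfolding cyl_def by simp_all
      then have "\<forall>i<k. y i = x i" by (simp add: map_eq_conv)
      then have "g y = g x" using k y(1) by blast
      then show "y \<in> {x \<in> topspace (branch_topology T). g x \<in> U}" using y(1) x(2) unfolding topspace_bt by simp
    qed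
    ultimately show "\<exists>S. openin (branch_topology T) S \<and> x \<in> S \<and> S \<subseteq> {x \<in> topspace (branch_topology T). g x \<in> U}"
      using op by blast
  qed
qed

lemma prefix_nth': "prefix xs ys \<Longrightarrow> i < length xs \<Longrightarrow> ys ! i = xs ! i"
  by (auto simp: prefix_def nth_append)

lemma exists_branch:
  assumes pr: "pruned_tree A T" and s: "s \<in> T"
  shows "\<exists>x\<in>branches T. \<forall>i<length s. x i = s ! i"
proof -
  define nx where "nx t = (SOME t'. t' \<in> T \<and> strict_prefix t t')" for t
  have nx: "nx t \<in> T \<and> strict_prefix t (nx t)" if "t \<in> T" for t
  proof -
    have "\<forall>s\<in>T. \<exists>t\<in>T. strict_prefix s t"
      using pruned_tree_def[THEN iffD1, OF pr] by (elim conjE)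
    then have "\<exists>t'. t' \<in> T \<and> strict_prefix t t'" using that by blast
    then show ?thesis unfolding nx_def by (rule someI_ex)
  qed
  define sq where "sq k = (nx ^^ k) s" for k
  have sqS: "sq (Suc k) = nx (sq k)" for k by (simp add: sq_def)
  have sqT: "sq k \<in> T" for k
  proof (induction k)
    case 0 show ?case by (simp add: sq_def s)
  next
    case (Suc k) show ?case using nx[OF Suc] sqS[of k] by simp
  qed
  have len: "length (sq k) \<ge> length s + k" for k
  proof (induction k)
    case 0 then show ?case by (simp add: sq_def)
  next
    case (Suc k)
    have "length (sq k) < length (sq (Suc k))" using nx[OF sqT[of k]] by (simp add: sqS prefix_length_less)
    then show ?case using Suc by simp
  qed
  have pre: "prefix (sq k) (sq (k + d))" for k d
  proof (induction d)
    case 0 then show ?case by simp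
  next
    case (Suc d)
    have "prefix (sq (k+d)) (sq (Suc (k+d)))" using nx[OF sqT[of "k+d"]] by (simp add: sqS strict_prefix_def)
    then have "prefix (sq k) (sq (Suc (k+d)))" using Suc prefix_order.trans by blast
    then show ?case by simp
  qed
  have nth: "sq m ! i = sq k ! i" if "k \<le> m" "i < length (sq k)" for k m i
    using pre[of k "m - k"] that prefix_nth' by simp
  define x where "x i = sq (Suc i) ! i" for i
  have xn: "x i = sq m ! i" if "i < m" for i m
    unfolding x_def using len[of "Suc i"] that by (intro nth[symmetric]) auto
  have "map x [0..<n] = take n (sq n)" for n
  proof (rule nth_equalityI)
    show "length (map x [0..<n]) = length (take n (sq n))" using len[of n] by simp
    fix i assume "i < length (map x [0..<n])"
    then have i: "i < n" by simp
    then show "map x [0..<n] ! i = take n (sq n) ! i" using xn[OF i] by simp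
  qed
  moreover have "take n (sq n) \<in> T" for n
  proof -
    have "\<forall>s\<in>T. \<forall>r. prefix r s \<longrightarrow> r \<in> T"
      using pruned_tree_def[THEN iffD1, OF pr] by (elim conjE)
    then show ?thesis using sqT[of n] take_is_prefix[of n "sq n"] by blast
  qed
  ultimately have "x \<in> branches T" by (simp add: branches_def)
  moreover have "\<forall>i<length s. x i = s ! i"
  proof (intro allI impI)
    fix i assume i: "i < length s"
    have "x i = sq (Suc i) ! i" by (simp add: x_def)
    also have "\<dots> = sq 0 ! i" using i by (intro nth) (auto simp: sq_def)
    finally show "x i = s ! i" by (simp add: sq_def)
  qed
  ultimately show ?thesis by blast
qed

lemma limsup_upper:
  assumes "ereal c = limsup (\<lambda>t. ereal (a t))" "e > 0"
  shows "\<exists>N. \<forall>t\<ge>N. a t < c + e"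
proof -
  have "ereal c < ereal (c + e)" using assms(2) by simp
  then have "limsup (\<lambda>t. ereal (a t)) < ereal (c + e)" using assms(1) by simp
  then have "eventually (\<lambda>t. ereal (a t) < ereal (c + e)) sequentially" by (rule Limsup_lessD)
  then show ?thesis by (simp add: eventually_sequentially)
qed

lemma limsup_lower:
  assumes "ereal c = limsup (\<lambda>t. ereal (a t))" "e > 0"
  shows "\<exists>t\<ge>N. a t > c - e"
proof (rule ccontr)
  assume "\<not> (\<exists>t\<ge>N. a t > c - e)"
  then have "eventually (\<lambda>t. ereal (a t) \<le> ereal (c - e)) sequentially"
    unfolding eventually_sequentially by (auto simp: not_less)
  then have "limsup (\<lambda>t. ereal (a t)) \<le> ereal (c - e)" by (rule Limsup_bounded)
  then have "ereal c \<le> ereal (c - e)" using assms(1) by simp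
  then show False using assms(2) by simp
qed

lemma baire_imp_limsup:
  assumes pr: "pruned_tree A T"
    and gc: "\<forall>n. continuous_map (branch_topology T) euclideanreal (g n)"
    and gl: "\<forall>x\<in>branches T. (\<lambda>n. g n x) \<longlonglongrightarrow> f x"
  shows "limsup_function T f"
proof -
  define pt where "pt s = (SOME y. y \<in> branches T \<and> (\<forall>i<length s. y i = s ! i))" for s
  define Q where "Q n s \<longleftrightarrow> (\<forall>y\<in>branches T. \<forall>z\<in>branches T. (\<forall>i<length s. y i = s!i) \<longrightarrow>
       (\<forall>i<length s. z i = s!i) \<longrightarrow> \<bar>g n y - g n z\<bar> \<le> 1 / (real n + 1))" for n s
  define m where "m s = Max {n. n \<le> length s \<and> (n = 0 \<or> Q n s)}" for s
  define u where "u s = g (m s) (pt s)" for s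
  show ?thesis unfolding limsup_function_def
  proof (intro exI[of _ u] ballI)
    fix x assume x: "x \<in> branches T"
    define s where "s t = map x [0..<Suc t]" for t
    have sT: "s t \<in> T" for t unfolding s_def using x unfolding branches_def by blast
    have sx: "\<forall>i<length (s t). x i = s t ! i" for t unfolding s_def by (simp del: upt_Suc)
    have pt: "pt (s t) \<in> branches T \<and> (\<forall>i<length (s t). pt (s t) i = s t ! i)" for t
    proof -
      have "\<exists>y. y \<in> branches T \<and> (\<forall>i<length (s t). y i = s t ! i)"
        using exists_branch[OF pr sT[of t]] by (simp only: Bex_def)
      then show ?thesis unfolding pt_def by (rule someI_ex)
    qed
    have mfin: "finite {n. n \<le> length (s t) \<and> (n = 0 \<or> Q n (s t))}" for t
      by (rule finite_subset[of _ "{..length (s t)}"]) auto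
    have mQ: "m (s t) = 0 \<or> Q (m (s t)) (s t)" for t
      using Max_in[OF mfin[of t]] unfolding m_def by auto
    have mge: "N \<le> m (s t)" if "N \<le> length (s t)" "Q N (s t)" for N t
      unfolding m_def using that by (intro Max_ge[OF mfin]) auto
    have ev: "\<exists>T0. \<forall>t\<ge>T0. N \<le> m (s t)" for N
    proof -
      have pos: "1 / (2 * (real N + 1)) > 0" by simp
      obtain k where k: "\<forall>y\<in>branches T. (\<forall>i<k. y i = x i) \<longrightarrow> \<bar>g N y - g N x\<bar> < 1 / (2 * (real N + 1))"
        using cont_point[OF gc[rule_format, of N] x pos] by blast
      have half: "1 / (2 * (real N + 1)) + 1 / (2 * (real N + 1)) = 1 / (real N + 1)" by (simp add: field_simps)
      show ?thesis
      proof (intro exI[of _ "k + N"] allI impI)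
        fix t assume t: "k + N \<le> t"
        have "Q N (s t)" unfolding Q_def
        proof (intro ballI impI)
          fix y z assume y: "y \<in> branches T" and z: "z \<in> branches T"
            and ya: "\<forall>i<length (s t). y i = s t ! i" and za: "\<forall>i<length (s t). z i = s t ! i"
          have lt: "k \<le> length (s t)" using t unfolding s_def by simp
          have "\<forall>i<k. y i = x i"
          proof (intro allI impI)
            fix i assume "i < k"
            then have "i < length (s t)" using lt by simp
            then show "y i = x i" using ya sx[of t] by simp
          qed
          then have "\<bar>g N y - g N x\<bar> < 1 / (2 * (real N + 1))" using k y by blast
          moreover have "\<forall>i<k. z i = x i"
          proof (intro allI impI)
            fix i assume "i < k"
            then have "i < length (s t)" using lt by simp
            then show "z i = x i" using za sx[of t] by simp
          qed
          then have "\<bar>g N z - g N x\<bar> < 1 / (2 * (real N + 1))" using k z by blast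
          ultimately show "\<bar>g N y - g N z\<bar> \<le> 1 / (real N + 1)" using half by (rule tri)
        qed
        moreover have "N \<le> length (s t)" using t unfolding s_def by simp
        ultimately show "N \<le> m (s t)" using mge by blast
      qed
    qed
    have close: "\<bar>u (s t) - g (m (s t)) x\<bar> \<le> 1 / (real (m (s t)) + 1)" if "m (s t) \<noteq> 0" for t
    proof -
      have q: "Q (m (s t)) (s t)" using mQ[of t] that by blast
      have "\<bar>g (m (s t)) (pt (s t)) - g (m (s t)) x\<bar> \<le> 1 / (real (m (s t)) + 1)"
        using q pt[of t] x sx[of t] unfolding Q_def by blast
      then show ?thesis unfolding u_def .
    qed
    have lim: "(\<lambda>t. u (s t)) \<longlonglongrightarrow> f x"
      unfolding LIMSEQ_iff real_norm_def
    proof (intro allI impI)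
      fix r :: real assume r: "r > 0"
      then have "r / 2 > 0" by simp
      then obtain N0 where N0: "\<forall>n\<ge>N0. \<bar>g n x - f x\<bar> < r / 2"
        using gl x unfolding LIMSEQ_iff real_norm_def by blast
      obtain N1 where N1: "1 / (real N1 + 1) < r / 2" using small_recip[OF \<open>r/2 > 0\<close>] by blast
      obtain T0 where T0: "\<forall>t\<ge>T0. max (max N0 N1) 1 \<le> m (s t)" using ev by blast
      show "\<exists>no. \<forall>t\<ge>no. \<bar>u (s t) - f x\<bar> < r"
      proof (intro exI[of _ T0] allI impI)
        fix t assume t: "T0 \<le> t"
        then have mt: "N0 \<le> m (s t)" "N1 \<le> m (s t)" "m (s t) \<noteq> 0" using T0 by auto
        have "\<bar>g (m (s t)) x - f x\<bar> < r / 2" using N0 mt by blast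
        moreover have "\<bar>u (s t) - g (m (s t)) x\<bar> \<le> 1 / (real (m (s t)) + 1)" using close mt by blast
        moreover have "1 / (real (m (s t)) + 1) \<le> 1 / (real N1 + 1)" using recip_mono mt by blast
        ultimately show "\<bar>u (s t) - f x\<bar> < r" using N1 by linarith
      qed
    qed
    then have "(\<lambda>t. ereal (u (map x [0..<Suc t]))) \<longlonglongrightarrow> ereal (f x)"
      unfolding s_def by (rule tendsto_ereal)
    then have "limsup (\<lambda>t. ereal (u (map x [0..<Suc t]))) = ereal (f x)"
      by (intro lim_imp_Limsup) simp_all
    then show "ereal (f x) = limsup (\<lambda>t. ereal (u (map x [0..<Suc t])))" by simp
  qed
qed

lemma limsup_imp_baire:
  assumes lu: "limsup_function T f" and lv: "limsup_function T (\<lambda>x. - f x)"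
  shows "baire_class_1 T f"
proof -
  obtain u where u: "\<forall>x\<in>branches T. ereal (f x) = limsup (\<lambda>t. ereal (u (map x [0..<Suc t])))"
    using lu unfolding limsup_function_def by blast
  obtain v where v: "\<forall>x\<in>branches T. ereal (- f x) = limsup (\<lambda>t. ereal (v (map x [0..<Suc t])))"
    using lv unfolding limsup_function_def by blast
  define a where "a x t = u (map x [0..<Suc t])" for x t
  define w where "w x t = - v (map x [0..<Suc t])" for x t
  define P where "P n x t \<longleftrightarrow> (\<exists>t'. n \<le> t' \<and> t' \<le> t \<and> w x t' \<le> a x t + 1 / (real n + 1))" for n x t
  define tau where "tau n x = (LEAST t. P n x t)" for n x
  define G where "G n x = a x (tau n x)" for n x
  have up: "\<exists>N. \<forall>t\<ge>N. a x t < f x + e" if "x \<in> branches T" "e > 0" for x e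
    unfolding a_def using limsup_upper[OF u[rule_format, OF that(1)] that(2)] .
  have lo: "\<exists>t\<ge>N. a x t > f x - e" if "x \<in> branches T" "e > 0" for x e N
    unfolding a_def using limsup_lower[OF u[rule_format, OF that(1)] that(2)] .
  have wup: "\<exists>N. \<forall>t\<ge>N. w x t > f x - e" if xb: "x \<in> branches T" and ep: "e > 0" for x e
  proof -
    obtain N where N: "\<forall>t\<ge>N. v (map x [0..<Suc t]) < - f x + e"
      using limsup_upper[OF v[rule_format, OF xb] ep] by blast
    show ?thesis unfolding w_def using N by (intro exI[of _ N]) (simp add: algebra_simps)
  qed
  have wlo: "\<exists>t\<ge>N. w x t < f x + e" if xb: "x \<in> branches T" and ep: "e > 0" for x e N
  proof -
    obtain t where t: "t \<ge> N" "v (map x [0..<Suc t]) > - f x - e"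
      using limsup_lower[OF v[rule_format, OF xb] ep] by blast
    show ?thesis unfolding w_def using t by (intro exI[of _ t]) (simp add: algebra_simps)
  qed
  have Pex: "\<exists>t. P n x t" if x: "x \<in> branches T" for n x
  proof -
    define e where "e = 1 / (2 * (real n + 1))"
    have e: "e > 0" unfolding e_def by simp
    have ee: "e + e = 1 / (real n + 1)" unfolding e_def by (simp add: field_simps)
    obtain t' where t': "t' \<ge> n" "w x t' < f x + e" using wlo[OF x e] by blast
    obtain t where t: "t \<ge> t'" "a x t > f x - e" using lo[OF x e] by blast
    have "w x t' \<le> a x t + 1 / (real n + 1)" using t'(2) t(2) ee by linarith
    then have "P n x t" unfolding P_def using t'(1) t(1) by blast
    then show ?thesis by blast
  qed
  have Ptau: "P n x (tau n x)" if "x \<in> branches T" for n x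
    unfolding tau_def using Pex[OF that] by (rule LeastI_ex)
  have cont: "continuous_map (branch_topology T) euclideanreal (G n)" for n
  proof (rule cont_loc_const, intro ballI)
    fix x assume x: "x \<in> branches T"
    show "\<exists>k. \<forall>y\<in>branches T. (\<forall>i<k. y i = x i) \<longrightarrow> G n y = G n x"
    proof (intro exI[of _ "Suc (tau n x)"] ballI impI)
      fix y assume y: "y \<in> branches T" and yx: "\<forall>i<Suc (tau n x). y i = x i"
      have mp: "map y [0..<Suc t] = map x [0..<Suc t]" if "t \<le> tau n x" for t
        using yx that by (simp add: map_eq_conv del: upt_Suc)
      have aeq: "a y t = a x t" if "t \<le> tau n x" for t unfolding a_def using mp[OF that] by (simp only:)
      have weq: "w y t = w x t" if "t \<le> tau n x" for t unfolding w_def using mp[OF that] by (simp only:)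
      have Peq: "P n y t \<longleftrightarrow> P n x t" if "t \<le> tau n x" for t
      proof -
        have "\<forall>t'\<le>t. w y t' = w x t'" using weq that by simp
        then show ?thesis unfolding P_def using aeq[OF that] by (metis (no_types, lifting))
      qed
      have "tau n y = tau n x"
        unfolding tau_def
      proof (rule Least_equality)
        show "P n y (LEAST t. P n x t)" using Peq[of "tau n x"] Ptau[OF x] unfolding tau_def by simp
        fix t assume Pt: "P n y t"
        show "(LEAST t. P n x t) \<le> t"
        proof (rule ccontr)
          assume "\<not> (LEAST t. P n x t) \<le> t"
          then have lt: "t < tau n x" unfolding tau_def by simp
          then have "P n x t" using Peq[of t] Pt by simp
          then have "tau n x \<le> t" unfolding tau_def by (rule Least_le)
          then show False using lt by simp
        qed
      qed
      then show "G n y = G n x" unfolding G_def using aeq[of "tau n x"] by simp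
    qed
  qed
  have conv: "(\<lambda>n. G n x) \<longlonglongrightarrow> f x" if x: "x \<in> branches T" for x
    unfolding LIMSEQ_iff real_norm_def
  proof (intro allI impI)
    fix r :: real assume r: "r > 0"
    then have r2: "r / 2 > 0" by simp
    obtain N1 where N1: "\<forall>t\<ge>N1. a x t < f x + r / 2" using up[OF x r2] by blast
    obtain N2 where N2: "\<forall>t\<ge>N2. w x t > f x - r / 2" using wup[OF x r2] by blast
    obtain N3 where N3: "1 / (real N3 + 1) < r / 2" using small_recip[OF r2] by blast
    show "\<exists>no. \<forall>n\<ge>no. \<bar>G n x - f x\<bar> < r"
    proof (intro exI[of _ "max N1 (max N2 N3)"] allI impI)
      fix n assume n: "max N1 (max N2 N3) \<le> n"
      obtain t' where t': "n \<le> t'" "t' \<le> tau n x" "w x t' \<le> a x (tau n x) + 1 / (real n + 1)"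
        using Ptau[OF x, of n] unfolding P_def by blast
      have "a x (tau n x) < f x + r / 2" using N1 n t' by simp
      moreover have "w x t' > f x - r / 2" using N2 n t' by simp
      moreover have "1 / (real n + 1) \<le> 1 / (real N3 + 1)" using recip_mono n by simp
      ultimately show "\<bar>G n x - f x\<bar> < r" unfolding G_def using t'(3) N3 by linarith
    qed
  qed
  show ?thesis unfolding baire_class_1_def using cont conv by blast
qed

theorem mainTheorem5:
  fixes A :: "'a set" and T :: "'a list set" and f :: "(nat \<Rightarrow> 'a) \<Rightarrow> real"
  assumes "A \<noteq> {}" and "countable A" and "pruned_tree A T"
  shows "baire_class_1 T f \<longleftrightarrow> limsup_function T f \<and> limsup_function T (\<lambda>x. - f x)"
proof
  assume "baire_class_1 T f"
  then obtain g where gc: "\<forall>n. continuous_map (branch_topology T) euclideanreal (g n)"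
    and gl: "\<forall>x\<in>branches T. (\<lambda>n. g n x) \<longlonglongrightarrow> f x"
    unfolding baire_class_1_def by blast
  have "limsup_function T f" using baire_imp_limsup[OF assms(3) gc gl] .
  moreover have "limsup_function T (\<lambda>x. - f x)"
  proof (rule baire_imp_limsup[OF assms(3), of "\<lambda>n x. - g n x"])
    show "\<forall>n. continuous_map (branch_topology T) euclideanreal (\<lambda>x. - g n x)"
      using gc by simp
    show "\<forall>x\<in>branches T. (\<lambda>n. - g n x) \<longlonglongrightarrow> - f x"
      using gl by (simp add: tendsto_minus)
  qed
  ultimately show "limsup_function T f \<and> limsup_function T (\<lambda>x. - f x)" by blast
next
  assume "limsup_function T f \<and> limsup_function T (\<lambda>x. - f x)"
  then show "baire_class_1 T f" using limsup_imp_baire by blast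
qed

end
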